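(* Let $q=p^\ell$ be a prime power with $p$ prime and $d$ a positive integer; write $d+1=s(q-q/p)+r$ with integers $s\ge0$, $0\le r<q-q/p$. Let $k\ge s+1$ and define $e^\star\in\{0,\dots,q-1\}^k$ by $e^\star_i=q-q/p$ for $1\le i\le s$, $e^\star_{s+1}=q-1$, and $e^\star_j=0$ for $j\ge s+2$; let $d^\star=|e^\star|_1$. Then for every function $g:\mathbb{F}_q^k\to\mathbb{F}_q$ of degree at most $d^\star-1$, $$\Pr_{\alpha\in\mathbb{F}_q^k}\left[g(\alpha)\neq\alpha^{e^\star}\right]\geq\frac{1}{q^{s+1}},$$ where $\alpha$ is uniform in $\mathbb{F}_q^k$.
   Context: For $\alpha\in\mathbb{F}_q^k$ and $e\in\{0,\dots,q-1\}^k$, $\alpha^e=\prod_i\alpha_i^{e_i}$ (with $0^0=1$). The degree of a function $\mathbb{F}_q^k\to\mathbb{F}_q$ is the total degree of its unique polynomial representation with individual degrees at most $q-1$. *)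

theory Defs
  imports Complex_Main "HOL-Computational_Algebra.Primes" "HOL-Library.FuncSet" "HOL-Library.Cardinality"
begin

text \<open>Points of F_q^k are represented as functions nat \<Rightarrow> 'a, extensional on {0..<k}.\<close>
definition points :: "nat \<Rightarrow> (nat \<Rightarrow> 'a) set" where
  "points k = PiE {0..<k} (\<lambda>_. UNIV)"

definition exps :: "nat \<Rightarrow> nat \<Rightarrow> (nat \<Rightarrow> nat) set" where
  "exps q k = PiE {0..<k} (\<lambda>_. {0..<q})"

text \<open>Monomial alpha^e = prod_i alpha_i^(e_i), with 0^0 = 1.\<close>
definition mon :: "nat \<Rightarrow> (nat \<Rightarrow> 'a::comm_ring_1) \<Rightarrow> (nat \<Rightarrow> nat) \<Rightarrow> 'a" where
  "mon k \<alpha> e = (\<Prod>i<k. \<alpha> i ^ e i)"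

text \<open>A function F_q^k \<rightarrow> F_q has degree at most D iff its unique reduced
  polynomial representation (individual degrees \<le> q-1) only uses monomials of
  total degree \<le> D.\<close>
definition fun_deg_le :: "nat \<Rightarrow> ((nat \<Rightarrow> 'a::{field,finite}) \<Rightarrow> 'a) \<Rightarrow> nat \<Rightarrow> bool" where
  "fun_deg_le k g D \<longleftrightarrow>
     (\<exists>c. \<forall>\<alpha>\<in>points k.
        g \<alpha> = (\<Sum>e\<in>{e\<in>exps (CARD('a)) k. (\<Sum>i<k. e i) \<le> D}. c e * mon k \<alpha> e))"

end

theory Submission imports Defs "HOL-Computational_Algebra.Polynomial" "HOL-Analysis.Convex"
begin

definition pval :: "nat \<Rightarrow> nat \<Rightarrow> ((nat\<Rightarrow>nat) \<Rightarrow> 'a) \<Rightarrow> (nat \<Rightarrow> 'a) \<Rightarrow> 'a::comm_ring_1" where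
  "pval q k c \<alpha> = (\<Sum>e\<in>exps q k. c e * mon k \<alpha> e)"

lemma mon_upd:
  assumes "g \<in> exps q k"
  shows "mon (Suc k) \<alpha> (g(k:=y)) = mon k \<alpha> g * \<alpha> k ^ y"
  unfolding mon_def by (simp add: lessThan_Suc)

lemma exps_Suc: "exps q (Suc k) = (\<lambda>(y, g). g(k := y)) ` ({0..<q} \<times> exps q k)"
  unfolding exps_def by (simp add: atLeast0_lessThan_Suc PiE_insert_eq)

lemma exps_inj: "inj_on (\<lambda>(y, g). g(k := y)) ({0..<q} \<times> exps q k)"
  unfolding exps_def by (rule inj_combinator) simp

lemma pval_Suc:
  "pval q (Suc k) c \<alpha> = (\<Sum>j<q. \<alpha> k ^ j * pval q k (\<lambda>e. c (e(k:=j))) \<alpha>)"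
proof -
  have "pval q (Suc k) c \<alpha> = (\<Sum>(y,g)\<in>{0..<q} \<times> exps q k. c (g(k:=y)) * mon (Suc k) \<alpha> (g(k:=y)))"
    unfolding pval_def exps_Suc by (subst sum.reindex[OF exps_inj]) (simp add: case_prod_beta)
  also have "\<dots> = (\<Sum>y\<in>{0..<q}. \<Sum>g\<in>exps q k. c (g(k:=y)) * (mon k \<alpha> g * \<alpha> k ^ y))"
    by (subst sum.cartesian_product[symmetric]) (auto intro!: sum.cong simp: mon_upd)
  also have "\<dots> = (\<Sum>j<q. \<alpha> k ^ j * pval q k (\<lambda>e. c (e(k:=j))) \<alpha>)"
    unfolding pval_def by (auto simp: sum_distrib_left atLeast0LessThan intro!: sum.cong)
  finally show ?thesis .
qed

lemma pval_upd: "pval q k c (\<alpha>(k:=t)) = pval q k c \<alpha>"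
  unfolding pval_def mon_def by (auto intro!: sum.cong prod.cong)

lemma univ_nonzeros:
  fixes a :: "nat \<Rightarrow> 'a::{field,finite}"
  assumes "a j0 \<noteq> 0" "\<And>j. j0 < j \<Longrightarrow> a j = 0" "j0 < q"
  shows "card {t. (\<Sum>j<q. t^j * a j) \<noteq> 0} \<ge> CARD('a) - j0"
proof -
  define p where "p = (\<Sum>j\<le>j0. monom (a j) j)"
  have ev: "(\<Sum>j<q. t^j * a j) = poly p t" for t
  proof -
    have "(\<Sum>j<q. t^j * a j) = (\<Sum>j\<le>j0. t^j * a j)"
      using assms by (intro sum.mono_neutral_right) auto
    also have "\<dots> = poly p t" unfolding p_def by (simp add: poly_sum poly_monom mult.commute)
    finally show ?thesis .
  qed
  have cp: "coeff p j0 = a j0" unfolding p_def by (simp add: coeff_sum)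
  hence p0: "p \<noteq> 0" using assms by auto
  have dp: "degree p \<le> j0" unfolding p_def
    by (intro degree_sum_le) (auto intro: order_trans[OF degree_monom_le])
  have "card {t. poly p t = 0} \<le> j0" using card_poly_roots_bound[OF p0] dp by linarith
  moreover have "{t. poly p t \<noteq> 0} = UNIV - {t. poly p t = 0}" by auto
  hence "card {t. poly p t \<noteq> 0} = CARD('a) - card {t. poly p t = 0}"
    by (simp add: card_Diff_subset)
  ultimately show ?thesis unfolding ev by linarith
qed

lemma points_upd: "\<alpha> \<in> points k \<Longrightarrow> \<alpha>(k:=t) \<in> points (Suc k)"
  unfolding points_def by (auto simp: PiE_iff extensional_def)

lemma footprint:
  fixes c :: "(nat\<Rightarrow>nat) \<Rightarrow> 'a::{field,finite}"
  assumes "e0 \<in> exps CARD('a) k" "c e0 \<noteq> 0"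
  shows "\<exists>e\<in>exps CARD('a) k. c e \<noteq> 0 \<and>
     card {\<alpha>\<in>points k. pval CARD('a) k c \<alpha> \<noteq> 0} \<ge> (\<Prod>i<k. CARD('a) - e i)"
  using assms
proof (induction k arbitrary: c e0)
  case 0
  then have e0: "e0 = (\<lambda>_. undefined)" by (simp add: exps_def)
  have "pval CARD('a) 0 c \<alpha> = c e0" for \<alpha> :: "nat \<Rightarrow> 'a"
    by (simp add: pval_def exps_def mon_def e0)
  then show ?case using 0 by (auto simp: points_def)
next
  case (Suc k)
  define q where "q = CARD('a)"
  define C where "C j = (\<lambda>e. c (e(k:=j)))" for j
  define J where "J = {j\<in>{0..<q}. \<exists>e\<in>exps q k. C j e \<noteq> 0}"
  obtain y g where yg: "y < q" "g \<in> exps q k" "e0 = g(k:=y)"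
    using Suc.prems(1) unfolding q_def exps_Suc by auto
  have "C y g = c e0" by (simp only: C_def yg(3))
  hence "C y g \<noteq> 0" using Suc.prems(2) by simp
  hence "y \<in> J" using yg unfolding J_def by auto
  have fJ: "finite J" unfolding J_def by auto
  define j0 where "j0 = Max J"
  have j0J: "j0 \<in> J" unfolding j0_def using fJ \<open>y \<in> J\<close> by (intro Max_in) auto
  have above: "pval q k (C j) \<alpha> = 0" if "j0 < j" "j < q" for j \<alpha>
  proof -
    { fix e assume "e \<in> exps q k"
      have "C j e = 0"
      proof (rule ccontr)
        assume "C j e \<noteq> 0"
        hence "j \<in> J" unfolding J_def using \<open>e \<in> exps q k\<close> that(2) by auto
        thus False using that(1) fJ j0_def by (meson Max_ge not_le)
      qed }
    thus ?thesis unfolding pval_def by simp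
  qed
  have j0q: "j0 < q" using j0J J_def by auto
  obtain e1 where e1: "e1 \<in> exps q k" "C j0 e1 \<noteq> 0" using j0J J_def by auto
  obtain e' where e': "e' \<in> exps q k" "C j0 e' \<noteq> 0"
     "card {\<alpha>\<in>points k. pval q k (C j0) \<alpha> \<noteq> 0} \<ge> (\<Prod>i<k. q - e' i)"
    using Suc.IH[of e1 "C j0"] e1 unfolding q_def by blast
  define A where "A = {\<alpha>\<in>points k. pval q k (C j0) \<alpha> \<noteq> 0}"
  define T where "T \<alpha> = {t. pval q (Suc k) c (\<alpha>(k:=t)) \<noteq> 0}" for \<alpha>
  have cardT: "card (T \<alpha>) \<ge> q - j0" if "\<alpha> \<in> A" for \<alpha>
  proof -
    define a where "a j = (if j < q then pval q k (C j) \<alpha> else 0)" for j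
    have "T \<alpha> = {t. (\<Sum>j<q. t^j * a j) \<noteq> 0}"
      unfolding T_def a_def by (simp add: pval_Suc pval_upd C_def)
    moreover have "card {t. (\<Sum>j<q. t^j * a j) \<noteq> 0} \<ge> CARD('a) - j0"
      using that j0q above by (intro univ_nonzeros) (auto simp: a_def A_def)
    ultimately show ?thesis unfolding q_def by simp
  qed
  define B where "B = (\<lambda>(\<alpha>,t). \<alpha>(k:=t)) ` Sigma A T"
  have inj: "inj_on (\<lambda>(\<alpha>,t). \<alpha>(k:=t)) (Sigma A T)"
  proof (rule inj_onI, clarify)
    fix \<alpha> t \<beta> u assume h: "\<alpha> \<in> A" "\<beta> \<in> A" "\<alpha>(k := t) = \<beta>(k := u)"
    hence "\<alpha> \<in> points k" "\<beta> \<in> points k" using A_def by auto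
    hence "\<alpha> k = \<beta> k" unfolding points_def by (auto simp: PiE_def extensional_def)
    thus "\<alpha> = \<beta> \<and> t = u" using h(3) by (metis fun_upd_apply fun_upd_triv fun_upd_upd)
  qed
  have fA: "finite A" unfolding A_def points_def
    by (rule finite_subset[where B="PiE {0..<k} (\<lambda>_. UNIV)"]) (auto intro: finite_PiE)
  have "card B = card (Sigma A T)" unfolding B_def by (rule card_image[OF inj])
  also have "\<dots> = (\<Sum>\<alpha>\<in>A. card (T \<alpha>))" using fA by (intro card_SigmaI) auto
  also have "\<dots> \<ge> (\<Sum>\<alpha>\<in>A. q - j0)" using cardT by (intro sum_mono) auto
  finally have cB: "card B \<ge> card A * (q - j0)" by simp
  have BS: "B \<subseteq> {\<alpha>\<in>points (Suc k). pval q (Suc k) c \<alpha> \<noteq> 0}"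
    unfolding B_def T_def A_def using points_upd by auto
  have fS: "finite {\<alpha>\<in>points (Suc k). pval q (Suc k) c \<alpha> \<noteq> 0}"
    unfolding points_def
    by (rule finite_subset[where B="PiE {0..<Suc k} (\<lambda>_. UNIV)"]) (auto intro: finite_PiE)
  define e where "e = e'(k:=j0)"
  have eS: "e \<in> exps q (Suc k)" unfolding e_def exps_Suc using e'(1) j0q by auto
  have ce: "c e \<noteq> 0" using e'(2) unfolding e_def C_def by simp
  have "(\<Prod>i<Suc k. q - e i) = (\<Prod>i<k. q - e' i) * (q - j0)"
    unfolding e_def by (auto simp: lessThan_Suc intro!: prod.cong)
  also have "\<dots> \<le> card A * (q - j0)" using e'(3) A_def by simp
  also have "\<dots> \<le> card B" by (rule cB)
  also have "\<dots> \<le> card {\<alpha>\<in>points (Suc k). pval q (Suc k) c \<alpha> \<noteq> 0}" by (rule card_mono[OF fS BS])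
  finally show ?case using eS ce unfolding q_def by blast
qed

lemma conv_bound:
  fixes q e :: nat
  assumes "q \<ge> 2" "e \<le> q - 1"
  shows "real q powr (1 - real e / (real q - 1)) \<le> real q - real e"
proof -
  define x where "x = real e / (real q - 1)"
  have x0: "0 \<le> x" and x1: "x \<le> 1" using assms unfolding x_def by (auto simp: field_simps)
  have "exp ((1 - x) *\<^sub>R ln (real q) + x *\<^sub>R 0) \<le> (1 - x) * exp (ln (real q)) + x * exp 0"
    using convex_onD[OF exp_convex] x0 x1 by blast
  moreover have "real q powr (1 - x) = exp ((1 - x) *\<^sub>R ln (real q) + x *\<^sub>R 0)"
    using assms by (simp add: powr_def)
  moreover have "x * (real q - 1) = real e" using assms unfolding x_def by simp
  moreover have "(1 - x) * exp (ln (real q)) + x * exp 0 = real q - x * (real q - 1)"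
    using assms by (simp add: algebra_simps)
  ultimately show ?thesis unfolding x_def by simp
qed

lemma conv_bound':
  fixes q e :: nat
  assumes "q \<ge> 2" "e \<le> q - 1"
  shows "real q powr (1 - real e / (real q - 1)) \<le> real (q - e)"
  using conv_bound[OF assms] assms by (simp add: of_nat_diff)

lemma prod_bound:
  fixes q k m :: nat and e :: "nat \<Rightarrow> nat"
  assumes "q \<ge> 2" "\<And>i. i < k \<Longrightarrow> e i \<le> q - 1" "(\<Sum>i<k. e i) \<le> m * (q - 1)" "m \<le> k"
  shows "real q ^ (k - m) \<le> (\<Prod>i<k. real (q - e i))"
proof -
  have "real q ^ (k - m) = real q powr (real k - real m)"
    using assms by (simp add: powr_realpow[symmetric] of_nat_diff)
  also have "\<dots> \<le> real q powr (\<Sum>i<k. (1 - real (e i) / (real q - 1)))"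
  proof (rule powr_mono)
    have "(\<Sum>i<k. real (e i)) \<le> real m * (real q - 1)"
      using assms(3) assms(1) by (metis of_nat_1 of_nat_diff of_nat_le_iff of_nat_mult of_nat_sum one_le_numeral order.trans)
    hence "(\<Sum>i<k. real (e i)) / (real q - 1) \<le> real m" using assms(1) by (simp add: field_simps)
    thus "real k - real m \<le> (\<Sum>i<k. (1 - real (e i) / (real q - 1)))"
      by (simp add: sum_subtractf sum_divide_distrib[symmetric])
  qed (use assms in auto)
  also have "\<dots> = (\<Prod>i<k. real q powr (1 - real (e i) / (real q - 1)))"
    using assms by (simp add: powr_sum)
  also have "\<dots> \<le> (\<Prod>i<k. real (q - e i))"
    proof (rule prod_mono, rule conjI)
    fix i assume i: "i \<in> {..<k}"
    show "0 \<le> real q powr (1 - real (e i) / (real q - 1))" by simp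
    show "real q powr (1 - real (e i) / (real q - 1)) \<le> real (q - e i)"
      using i by (intro conv_bound' assms) auto
  qed
  finally show ?thesis .
qed

theorem lemma4p2:
  fixes g :: "(nat \<Rightarrow> 'a::{field,finite}) \<Rightarrow> 'a"
    and p l d s r k dstar :: nat and estar :: "nat \<Rightarrow> nat"
  assumes "prime p"
    and "CARD('a) = p ^ l"
    and "d > 0"
    and "d + 1 = s * (CARD('a) - CARD('a) div p) + r"
    and "r < CARD('a) - CARD('a) div p"
    and "k \<ge> s + 1"
    and "estar = (\<lambda>i. if i < s then CARD('a) - CARD('a) div p
                       else if i = s then CARD('a) - 1 else 0)"
    and "dstar = (\<Sum>i<k. estar i)"
    and "fun_deg_le k g (dstar - 1)"
  shows "real (card {\<alpha>\<in>points k. g \<alpha> \<noteq> mon k \<alpha> estar}) / real (card (points k :: (nat \<Rightarrow> 'a) set))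
           \<ge> 1 / real (CARD('a)) ^ (s + 1)"
proof -
  define q where "q = CARD('a)"
  have "card {0::'a, 1} \<le> q" unfolding q_def by (rule card_mono) auto
  hence q2: "q \<ge> 2" by simp
  have "l \<noteq> 0" using assms(2) q2 q_def by (cases l) auto
  hence qp: "q = p * p ^ (l - 1)" using assms(2) q_def by (metis power_eq_if)
  have p0: "p > 0" using assms(1) prime_gt_0_nat by blast
  hence qdiv: "q div p = p ^ (l - 1)" using qp by simp
  hence qdiv1: "q div p \<ge> 1" using p0 by simp
  have est_le: "estar i \<le> (if i \<le> s then q - 1 else 0)" for i
    using assms(7) qdiv1 q_def by auto
  define est' where "est' = restrict estar {0..<k}"
  have estq: "estar i < q" for i
    using est_le[of i] q2 by (cases "i \<le> s") auto
  have est'E: "est' \<in> exps q k"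
    unfolding exps_def est'_def using estq by (auto simp: PiE_iff)
  have mon_est: "mon k \<alpha> est' = mon k \<alpha> estar" for \<alpha> :: "nat \<Rightarrow> 'a"
    unfolding mon_def est'_def by (auto intro!: prod.cong)
  have sum_est: "(\<Sum>i<k. est' i) = dstar" unfolding assms(8) est'_def by (auto intro!: sum.cong)
  have "estar s \<le> dstar" unfolding assms(8) using assms(6) by (intro member_le_sum) auto
  hence dstar1: "dstar \<ge> 1" using assms(7) q2 q_def by simp
  have "dstar \<le> (\<Sum>i<k. if i \<le> s then q - 1 else 0)" unfolding assms(8) by (intro sum_mono est_le)
  also have "\<dots> = (\<Sum>i\<in>{..s}. q - 1)"
    using assms(6) by (intro sum.mono_neutral_cong_right) auto
  finally have dstar_le: "dstar \<le> (s + 1) * (q - 1)" by simp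
  obtain c where c: "\<And>\<alpha>. \<alpha> \<in> points k \<Longrightarrow>
        g \<alpha> = (\<Sum>e\<in>{e\<in>exps q k. (\<Sum>i<k. e i) \<le> dstar - 1}. c e * mon k \<alpha> e)"
    using assms(9) unfolding fun_deg_le_def q_def by blast
  define c' where "c' e = (if e = est' then 1 else 0) - (if (\<Sum>i<k. e i) \<le> dstar - 1 then c e else 0)"
    for e :: "nat \<Rightarrow> nat"
  have fE: "finite (exps q k)" unfolding exps_def by (intro finite_PiE) auto
  have pv: "pval q k c' \<alpha> = mon k \<alpha> estar - g \<alpha>" if "\<alpha> \<in> points k" for \<alpha>
  proof -
    have "pval q k c' \<alpha> = (\<Sum>e\<in>exps q k. (if e = est' then 1 else 0) * mon k \<alpha> e)
        - (\<Sum>e\<in>exps q k. (if (\<Sum>i<k. e i) \<le> dstar - 1 then c e else 0) * mon k \<alpha> e)"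
      unfolding pval_def c'_def left_diff_distrib sum_subtractf ..
    also have "(\<Sum>e\<in>exps q k. (if e = est' then 1 else 0) * mon k \<alpha> e)
             = (\<Sum>e\<in>exps q k. if e = est' then mon k \<alpha> e else 0)"
      by (intro sum.cong) auto
    also have "\<dots> = mon k \<alpha> est'" using est'E fE by simp
    also have "(\<Sum>e\<in>exps q k. (if (\<Sum>i<k. e i) \<le> dstar - 1 then c e else 0) * mon k \<alpha> e)
             = (\<Sum>e\<in>exps q k. if (\<Sum>i<k. e i) \<le> dstar - 1 then c e * mon k \<alpha> e else 0)"
      by (intro sum.cong) auto
    also have "\<dots> = g \<alpha>" unfolding c[OF that] using fE by (simp add: sum.inter_filter)
    finally show ?thesis by (simp add: mon_est)
  qed
  have "c' est' \<noteq> 0" unfolding c'_def using sum_est dstar1 by simp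
  hence "\<exists>e\<in>exps q k. c' e \<noteq> 0 \<and> card {\<alpha>\<in>points k. pval q k c' \<alpha> \<noteq> 0} \<ge> (\<Prod>i<k. q - e i)"
    using footprint[of est' k c'] est'E unfolding q_def by blast
  then obtain e where e: "e \<in> exps q k" "c' e \<noteq> 0"
    "card {\<alpha>\<in>points k. pval q k c' \<alpha> \<noteq> 0} \<ge> (\<Prod>i<k. q - e i)" by blast
  have esum: "(\<Sum>i<k. e i) \<le> (s + 1) * (q - 1)"
  proof (cases "e = est'")
    case True thus ?thesis using sum_est dstar_le by simp
  next
    case False thus ?thesis using e(2) dstar_le unfolding c'_def by (auto split: if_splits)
  qed
  have ebd: "e i \<le> q - 1" if "i < k" for i
  proof -
    have "e i < q" using e(1) that unfolding exps_def by (auto simp: PiE_iff)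
    thus ?thesis by linarith
  qed
  have set_eq: "{\<alpha>\<in>points k. g \<alpha> \<noteq> mon k \<alpha> estar} = {\<alpha>\<in>points k. pval q k c' \<alpha> \<noteq> 0}"
    using pv by auto
  have "real q ^ (k - (s + 1)) \<le> (\<Prod>i<k. real (q - e i))"
    using prod_bound[OF q2 ebd esum] assms(6) by simp
  also have "\<dots> \<le> real (card {\<alpha>\<in>points k. g \<alpha> \<noteq> mon k \<alpha> estar})"
    using e(3) unfolding set_eq by (metis of_nat_le_iff of_nat_prod)
  finally have lb: "real q ^ (k - (s + 1)) \<le> real (card {\<alpha>\<in>points k. g \<alpha> \<noteq> mon k \<alpha> estar})" .
  have cp: "card (points k :: (nat \<Rightarrow> 'a) set) = q ^ k"
    unfolding points_def q_def by (simp add: card_PiE)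
  have "1 / real q ^ (s + 1) = real q ^ (k - (s + 1)) / real q ^ k"
    using assms(6) q2 by (simp add: power_diff)
  also have "\<dots> \<le> real (card {\<alpha>\<in>points k. g \<alpha> \<noteq> mon k \<alpha> estar}) / real q ^ k"
    by (intro divide_right_mono lb) auto
  finally show ?thesis unfolding cp q_def by simp
qed

end
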